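(* Let $\mathscr{C}$ be a graph category. Then $\mathscr{C}$ is group-theoretical if and only if there exists a set $S$ of bilabelled graphs such that for every $(K,\mathbf{a},\mathbf{b})\in S$ every vertex of $K$ occurs among the entries of $\mathbf{a}$ or $\mathbf{b}$, and $\mathscr{C}$ is the graph category generated by $S\cup\{\mathbf{P}_{\mathrm{gt}}\}$.
   Context: Graphs are finite, undirected, without multiple edges, loops allowed, considered up to isomorphism; $N_k$ is the edgeless graph on $k$ vertices. Bilabelled graph: $(K,\mathbf{a},\mathbf{b})$ with $K$ a graph, $\mathbf{a}\in V(K)^k$ (inputs), $\mathbf{b}\in V(K)^l$ (outputs), up to isomorphism of $K$ preserving the tuples. Operations: tensor product $(K,\mathbf{a},\mathbf{b})\otimes(H,\mathbf{c},\mathbf{d})=(K\sqcup H,\mathbf{a}\mathbf{c},\mathbf{b}\mathbf{d})$; composition (for $|\mathbf{b}|=|\mathbf{c}|$) $(H,\mathbf{c},\mathbf{d})\cdot(K,\mathbf{a},\mathbf{b})=(H\cdot K,\mathbf{a},\mathbf{d})$ where $H\cdot K$ is obtained from $K\sqcup H$ by identifying $b_i$ with $c_i$ for all $i$ (ignoring edge multiplicities); involution $(K,\mathbf{a},\mathbf{b})^*=(K,\mathbf{b},\mathbf{a})$. For a partition $\pi$ of $V(K)$, $K/\pi$ has the blocks as vertices with an edge between two (possibly equal) blocks iff $K$ has an edge between some of their elements, $q_\pi$ the quotient map, and $(K,\mathbf{a},\mathbf{b})/\pi:=(K/\pi,q_\pi(\mathbf{a}),q_\pi(\mathbf{b}))$.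 Let $\mathbf{0}=(N_0,\emptyset,\emptyset)$ and $\mathbf{M}^{k,l}=(M,(v,\dots,v),(v,\dots,v))$ for the one-vertex loopless graph $M$ with vertex $v$ ($k$ inputs, $l$ outputs). A graph category is a set of bilabelled graphs containing $\mathbf{M}^{1,1},\mathbf{M}^{0,2},\mathbf{0}$ and closed under tensor products, compositions and involution; it is group-theoretical if it is also closed under all quotients $\mathbf{K}\mapsto\mathbf{K}/\pi$. $\mathbf{P}_{\mathrm{gt}}$ denotes the bilabelled graph $(N_2,(x,y,y),(y,y,x))$, where $N_2$ has the two vertices $x,y$ and no edges. *)

theory Defs
  imports "HOL-Library.Disjoint_Sets"
begin

text \<open>An edge is a set of one
(loop) or two vertices. Bilabelled graphs are considered up to isomorphism; this is
built into the notion of graph category below (closure under isomorphism).\<close>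

record bgraph =
  bV :: "nat set"
  bE :: "nat set set"
  bin :: "nat list"
  bout :: "nat list"

definition wf_bgraph :: "bgraph \<Rightarrow> bool" where
  "wf_bgraph K \<longleftrightarrow> finite (bV K) \<and>
     (\<forall>e\<in>bE K. e \<subseteq> bV K \<and> (card e = 1 \<or> card e = 2)) \<and>
     set (bin K) \<subseteq> bV K \<and> set (bout K) \<subseteq> bV K"

text \<open>Image of a bilabelled graph under a vertex map (edge multiplicities ignored).\<close>
definition bimg :: "(nat \<Rightarrow> nat) \<Rightarrow> bgraph \<Rightarrow> bgraph" where
  "bimg f K = \<lparr> bV = f ` bV K, bE = (\<lambda>e. f ` e) ` bE K,
               bin = map f (bin K), bout = map f (bout K) \<rparr>"

definition biso :: "bgraph \<Rightarrow> bgraph \<Rightarrow> bool" where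
  "biso K L \<longleftrightarrow> (\<exists>f. bij_betw f (bV K) (bV L) \<and> bimg f K = L)"

definition bquot :: "bgraph \<Rightarrow> nat set set \<Rightarrow> bgraph" where
  "bquot K P = bimg (\<lambda>v. Min (\<Union>{B\<in>P. v \<in> B})) K"

text \<open>Disjoint union of underlying graphs: K-vertices v \<mapsto> 2v, H-vertices w \<mapsto> 2w+1.\<close>
definition lft :: "nat \<Rightarrow> nat" where "lft v = 2 * v"
definition rgt :: "nat \<Rightarrow> nat" where "rgt w = 2 * w + 1"

definition btensor :: "bgraph \<Rightarrow> bgraph \<Rightarrow> bgraph" where
  "btensor K H = \<lparr> bV = lft ` bV K \<union> rgt ` bV H,
                   bE = (\<lambda>e. lft ` e) ` bE K \<union> (\<lambda>e. rgt ` e) ` bE H,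
                   bin = map lft (bin K) @ map rgt (bin H),
                   bout = map lft (bout K) @ map rgt (bout H) \<rparr>"

text \<open>Composition H \<cdot> K (requires length (bout K) = length (bin H)):
 identify output b_i of K with input c_i of H in K \<squnion> H.\<close>
definition bcomp :: "bgraph \<Rightarrow> bgraph \<Rightarrow> bgraph" where
  "bcomp H K =
    (let U = lft ` bV K \<union> rgt ` bV H;
         R = {(lft (bout K ! i), rgt (bin H ! i)) | i. i < length (bout K)};
         Eq = Id_on U \<union> (R \<union> R\<inverse>)\<^sup>+;
         G = \<lparr> bV = U, bE = (\<lambda>e. lft ` e) ` bE K \<union> (\<lambda>e. rgt ` e) ` bE H,
               bin = map lft (bin K), bout = map rgt (bout H) \<rparr>
     in bquot G (U // Eq))"

definition binv :: "bgraph \<Rightarrow> bgraph" where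
  "binv K = \<lparr> bV = bV K, bE = bE K, bin = bout K, bout = bin K \<rparr>"

definition bM :: "nat \<Rightarrow> nat \<Rightarrow> bgraph" where
  "bM k l = \<lparr> bV = {0}, bE = {}, bin = replicate k 0, bout = replicate l 0 \<rparr>"

definition bzero :: bgraph where
  "bzero = \<lparr> bV = {}, bE = {}, bin = [], bout = [] \<rparr>"

definition Pgt :: bgraph where
  "Pgt = \<lparr> bV = {0, 1}, bE = {}, bin = [0, 1, 1], bout = [1, 1, 0] \<rparr>"

definition graph_category :: "bgraph set \<Rightarrow> bool" where
  "graph_category C \<longleftrightarrow>
     (\<forall>K\<in>C. wf_bgraph K) \<and>
     (\<forall>K\<in>C. \<forall>L. biso K L \<longrightarrow> L \<in> C) \<and>
     bM 1 1 \<in> C \<and> bM 0 2 \<in> C \<and> bzero \<in> C \<and>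
     (\<forall>K\<in>C. \<forall>H\<in>C. btensor K H \<in> C) \<and>
     (\<forall>K\<in>C. \<forall>H\<in>C. length (bout K) = length (bin H) \<longrightarrow> bcomp H K \<in> C) \<and>
     (\<forall>K\<in>C. binv K \<in> C)"

definition group_theoretical :: "bgraph set \<Rightarrow> bool" where
  "group_theoretical C \<longleftrightarrow> graph_category C \<and>
     (\<forall>K\<in>C. \<forall>P. partition_on (bV K) P \<longrightarrow> bquot K P \<in> C)"

definition gen_category :: "bgraph set \<Rightarrow> bgraph set" where
  "gen_category S = \<Inter>{C. graph_category C \<and> S \<subseteq> C}"

end

theory Submission
  imports Defs
begin



abbreviation NG :: "nat set \<Rightarrow> nat set set \<Rightarrow> nat list \<Rightarrow> nat list \<Rightarrow> bgraph" where
  "NG V E a b \<equiv> \<lparr>bV = V, bE = E, bin = a, bout = b\<rparr>"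

lemma bgraph_eta: "K = NG (bV K) (bE K) (bin K) (bout K)"
  by simp

lemma wf_NG: "wf_bgraph (NG V E a b) \<longleftrightarrow> finite V \<and>
     (\<forall>e\<in>E. e \<subseteq> V \<and> (card e = 1 \<or> card e = 2)) \<and> set a \<subseteq> V \<and> set b \<subseteq> V"
  by (simp add: wf_bgraph_def)

lemma bimg_NG: "bimg f (NG V E a b) = NG (f ` V) ((\<lambda>e. f ` e) ` E) (map f a) (map f b)"
  by (simp add: bimg_def)

lemma bimg_comp: "bimg f (bimg g K) = bimg (f \<circ> g) K"
  by (simp add: bimg_def image_comp)

lemma bimg_cong:
  assumes "wf_bgraph K" "\<And>x. x \<in> bV K \<Longrightarrow> f x = g x"
  shows "bimg f K = bimg g K"
proof -
  have E: "\<And>e. e \<in> bE K \<Longrightarrow> f ` e = g ` e"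
    using assms unfolding wf_bgraph_def by (metis image_cong subsetD)
  have "map f (bin K) = map g (bin K)" "map f (bout K) = map g (bout K)"
    using assms unfolding wf_bgraph_def by (auto intro!: map_cong)
  moreover have "f ` bV K = g ` bV K" using assms(2) by (rule image_cong[OF refl])
  moreover have "(\<lambda>e. f ` e) ` bE K = (\<lambda>e. g ` e) ` bE K" using E by (rule image_cong[OF refl])
  ultimately show ?thesis by (simp add: bimg_def)
qed

lemma bimg_id_on:
  assumes "wf_bgraph K" "\<And>x. x \<in> bV K \<Longrightarrow> f x = x"
  shows "bimg f K = K"
proof -
  have "bimg f K = bimg id K" using bimg_cong[OF assms(1), of f id] assms(2) by simp
  also have "\<dots> = K" by (simp add: bimg_def)
  finally show ?thesis .
qed

lemma wf_bimg: "wf_bgraph K \<Longrightarrow> wf_bgraph (bimg f K)"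
proof -
  assume w: "wf_bgraph K"
  have "card (f ` e) = 1 \<or> card (f ` e) = 2" if "e \<in> bE K" for e
  proof -
    have "card e = 1 \<or> card e = 2" "finite e" using w that unfolding wf_bgraph_def
      by (auto intro: finite_subset)
    moreover have "e \<noteq> {}" using calculation by auto
    ultimately have "card (f ` e) \<le> 2" "card (f ` e) \<ge> 1"
      using card_image_le[of e f] by (auto simp: Suc_le_eq card_gt_0_iff)
    then show ?thesis by linarith
  qed
  then show ?thesis using w unfolding wf_bgraph_def bimg_def by auto
qed

lemma biso_bimg: "inj_on f (bV K) \<Longrightarrow> biso K (bimg f K)"
  unfolding biso_def by (auto intro!: exI[of _ f] simp: bij_betw_def bimg_def)

lemma quot_iso:
  assumes "wf_bgraph K"
    and "\<And>x y. x \<in> bV K \<Longrightarrow> y \<in> bV K \<Longrightarrow> g x = g y \<longleftrightarrow> k x = k y"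
  shows "biso (bimg g K) (bimg k K)"
proof -
  define \<psi> where "\<psi> = k \<circ> inv_into (bV K) g"
  have psi: "\<psi> (g x) = k x" if "x \<in> bV K" for x
  proof -
    have "inv_into (bV K) g (g x) \<in> bV K" "g (inv_into (bV K) g (g x)) = g x"
      using that by (auto intro: inv_into_into f_inv_into_f)
    then show ?thesis using assms(2) that unfolding \<psi>_def by auto
  qed
  have "inj_on \<psi> (g ` bV K)"
    by (auto simp: inj_on_def psi assms(2))
  then have "bij_betw \<psi> (bV (bimg g K)) (bV (bimg k K))"
    by (auto simp: bij_betw_def bimg_def psi image_iff)
  moreover have "bimg \<psi> (bimg g K) = bimg k K"
    unfolding bimg_comp by (rule bimg_cong[OF assms(1)]) (simp add: psi)
  ultimately show ?thesis unfolding biso_def by blast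
qed

locale gcat =
  fixes C :: "bgraph set"
  assumes gc: "graph_category C"
begin

lemma wf: "K \<in> C \<Longrightarrow> wf_bgraph K"
  using gc unfolding graph_category_def by blast

lemma iso: "K \<in> C \<Longrightarrow> biso K L \<Longrightarrow> L \<in> C"
  using gc unfolding graph_category_def by blast

lemma tens: "K \<in> C \<Longrightarrow> H \<in> C \<Longrightarrow> btensor K H \<in> C"
  using gc unfolding graph_category_def by blast

lemma comp: "K \<in> C \<Longrightarrow> H \<in> C \<Longrightarrow> length (bout K) = length (bin H) \<Longrightarrow> bcomp H K \<in> C"
  using gc unfolding graph_category_def by blast

lemma inv: "K \<in> C \<Longrightarrow> binv K \<in> C"
  using gc unfolding graph_category_def by blast

lemma rename: "K \<in> C \<Longrightarrow> inj_on f (bV K) \<Longrightarrow> bimg f K \<in> C"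
  using iso biso_bimg by blast

lemma M11: "NG {x} {} [x] [x] \<in> C"
proof -
  have "bM 1 1 \<in> C" using gc unfolding graph_category_def by blast
  from rename[OF this, of "\<lambda>_. x"] show ?thesis by (simp add: bM_def bimg_def)
qed

lemma M02: "NG {x} {} [] [x, x] \<in> C"
proof -
  have "bM 0 2 \<in> C" using gc unfolding graph_category_def by blast
  from rename[OF this, of "\<lambda>_. x"] show ?thesis by (simp add: bM_def bimg_def numeral_2_eq_2)
qed

lemma M20: "NG {x} {} [x, x] [] \<in> C"
  using inv[OF M02[of x]] by (simp add: binv_def)

lemma zero: "NG {} {} [] [] \<in> C"
  using gc unfolding graph_category_def bzero_def by blast

lemma inv_NG: "NG V E a b \<in> C \<Longrightarrow> NG V E b a \<in> C"
  using inv by (force simp: binv_def)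

lemma tensor_named:
  assumes "K \<in> C" "H \<in> C" "bV K \<inter> bV H = {}"
  shows "NG (bV K \<union> bV H) (bE K \<union> bE H) (bin K @ bin H) (bout K @ bout H) \<in> C"
proof -
  have wK: "wf_bgraph K" and wH: "wf_bgraph H" using assms wf by auto
  let ?d = "\<lambda>t::nat. t div 2"
  have inj: "inj_on ?d (bV (btensor K H))"
    using assms(3) by (auto simp: inj_on_def btensor_def lft_def rgt_def)
  have 1: "?d ` lft ` e = e" for e by (force simp: lft_def image_iff)
  have 2: "?d ` rgt ` e = e" for e by (force simp: rgt_def image_iff)
  have "bimg ?d (btensor K H) = NG (bV K \<union> bV H) (bE K \<union> bE H) (bin K @ bin H) (bout K @ bout H)"
    by (simp add: bimg_def btensor_def image_Un image_comp 1 2 lft_def rgt_def comp_def)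
  then show ?thesis using rename[OF tens[OF assms(1,2)] inj] by simp
qed

end




definition cU :: "bgraph \<Rightarrow> bgraph \<Rightarrow> nat set" where
  "cU K H = lft ` bV K \<union> rgt ` bV H"
definition cR :: "bgraph \<Rightarrow> bgraph \<Rightarrow> (nat \<times> nat) set" where
  "cR K H = {(lft (bout K ! i), rgt (bin H ! i)) | i. i < length (bout K)}"
definition cEq :: "bgraph \<Rightarrow> bgraph \<Rightarrow> (nat \<times> nat) set" where
  "cEq K H = Id_on (cU K H) \<union> (cR K H \<union> (cR K H)\<inverse>)\<^sup>+"
definition cG :: "bgraph \<Rightarrow> bgraph \<Rightarrow> bgraph" where
  "cG K H = NG (cU K H) ((\<lambda>e. lft ` e) ` bE K \<union> (\<lambda>e. rgt ` e) ` bE H)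
              (map lft (bin K)) (map rgt (bout H))"

lemma inj_lft: "inj lft" by (auto simp: inj_on_def lft_def)
lemma inj_rgt: "inj rgt" by (auto simp: inj_on_def rgt_def)
lemma lft_rgt_neq[simp]: "lft x \<noteq> rgt y" "rgt y \<noteq> lft x"
  by (auto simp: lft_def rgt_def) presburger+
lemma lft_eq[simp]: "lft x = lft y \<longleftrightarrow> x = y" by (auto simp: lft_def)
lemma rgt_eq[simp]: "rgt x = rgt y \<longleftrightarrow> x = y" by (auto simp: rgt_def)
lemma card_lft[simp]: "card (lft ` e) = card e" by (rule card_image) (simp add: inj_on_def)
lemma card_rgt[simp]: "card (rgt ` e) = card e" by (rule card_image) (simp add: inj_on_def)

lemma bcomp_unf: "bcomp H K = bquot (cG K H) (cU K H // cEq K H)"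
  by (simp add: bcomp_def Let_def cU_def cR_def cEq_def cG_def)

context
  fixes K H
  assumes wK: "wf_bgraph K" and wH: "wf_bgraph H" and len: "length (bout K) = length (bin H)"
begin

lemma cR_sub: "cR K H \<subseteq> cU K H \<times> cU K H"
  using wK wH len unfolding cR_def cU_def wf_bgraph_def by (auto intro!: imageI nth_mem)

lemma cU_fin: "finite (cU K H)"
  using wK wH unfolding cU_def wf_bgraph_def by auto

lemma cT_sub: "(cR K H \<union> (cR K H)\<inverse>)\<^sup>+ \<subseteq> cU K H \<times> cU K H"
proof -
  have "cR K H \<union> (cR K H)\<inverse> \<subseteq> cU K H \<times> cU K H" using cR_sub by auto
  then show ?thesis by (rule trancl_subset_Sigma)
qed

lemma cEq_equiv: "equiv (cU K H) (cEq K H)"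
proof (rule equivI)
  show "cEq K H \<subseteq> cU K H \<times> cU K H" unfolding cEq_def using cT_sub by auto
  show "refl_on (cU K H) (cEq K H)"
    unfolding refl_on_def cEq_def using cT_sub by auto
  show "sym (cEq K H)"
  proof -
    have "sym (cR K H \<union> (cR K H)\<inverse>)" by (auto simp: sym_def)
    then have "sym ((cR K H \<union> (cR K H)\<inverse>)\<^sup>+)" by (rule sym_trancl)
    then show ?thesis unfolding cEq_def by (auto simp: sym_def)
  qed
  show "trans (cEq K H)"
  proof (rule transI)
    fix x y z assume "(x, y) \<in> cEq K H" "(y, z) \<in> cEq K H"
    then show "(x, z) \<in> cEq K H" unfolding cEq_def
      by (auto simp: Id_on_def dest: trancl_trans)
  qed
qed

lemma cEq_sub: "cEq K H \<subseteq> cU K H \<times> cU K H"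
  unfolding cEq_def using cT_sub by auto

lemma cEq_att: "i < length (bout K) \<Longrightarrow> (lft (bout K ! i), rgt (bin H ! i)) \<in> cEq K H"
  unfolding cEq_def cR_def by blast

lemma cEq_att': "i < length (bout K) \<Longrightarrow> (rgt (bin H ! i), lft (bout K ! i)) \<in> cEq K H"
  unfolding cEq_def cR_def by blast

lemma cEq_trans: "(x, y) \<in> cEq K H \<Longrightarrow> (y, z) \<in> cEq K H \<Longrightarrow> (x, z) \<in> cEq K H"
  using cEq_equiv unfolding equiv_def trans_def by blast

lemma cEq_sym: "(x, y) \<in> cEq K H \<Longrightarrow> (y, x) \<in> cEq K H"
  using cEq_equiv unfolding equiv_def sym_def by blast

lemma cEq_refl: "x \<in> cU K H \<Longrightarrow> (x, x) \<in> cEq K H"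
  unfolding cEq_def by auto

definition cmap :: "nat \<Rightarrow> nat" where "cmap t = Min (cEq K H `` {t})"

lemma blocks_dummy: "True" by simp

lemma blocks: "t \<in> cU K H \<Longrightarrow> \<Union>{B \<in> cU K H // cEq K H. t \<in> B} = cEq K H `` {t}"
proof -
  assume t: "t \<in> cU K H"
  have "{B \<in> cU K H // cEq K H. t \<in> B} = {cEq K H `` {t}}"
  proof (intro set_eqI iffI)
    fix B assume "B \<in> {B \<in> cU K H // cEq K H. t \<in> B}"
    then have "B \<in> cU K H // cEq K H" "t \<in> B" by auto
    then obtain x where "x \<in> cU K H" "B = cEq K H `` {x}" by (auto elim: quotientE)
    with \<open>t \<in> B\<close> have "(x, t) \<in> cEq K H" by simp
    then have "cEq K H `` {x} = cEq K H `` {t}" by (rule equiv_class_eq[OF cEq_equiv])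
    then show "B \<in> {cEq K H `` {t}}" using \<open>B = _\<close> by simp
  next
    fix B assume "B \<in> {cEq K H `` {t}}"
    then show "B \<in> {B \<in> cU K H // cEq K H. t \<in> B}"
      using t cEq_refl by (auto intro: quotientI)
  qed
  then show ?thesis by simp
qed

lemma bcomp_cmap: "bcomp H K = bimg cmap (cG K H)"
proof -
  have "bcomp H K = bimg (\<lambda>v. Min (\<Union>{B \<in> cU K H // cEq K H. v \<in> B})) (cG K H)"
    by (simp add: bcomp_unf bquot_def)
  also have "\<dots> = bimg cmap (cG K H)"
  proof (rule bimg_cong)
    show "wf_bgraph (cG K H)"
      using wK wH unfolding wf_bgraph_def cG_def cU_def by (auto 4 3)
    show "\<And>x. x \<in> bV (cG K H) \<Longrightarrow> Min (\<Union>{B \<in> cU K H // cEq K H. x \<in> B}) = cmap x"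
      by (simp add: cG_def blocks cmap_def)
  qed
  finally show ?thesis .
qed

lemma wf_cG: "wf_bgraph (cG K H)"
  using wK wH unfolding wf_bgraph_def cG_def cU_def by (auto 4 3)

lemma cmap_kernel:
  assumes "t \<in> cU K H" "t' \<in> cU K H"
  shows "cmap t = cmap t' \<longleftrightarrow> (t, t') \<in> cEq K H"
proof
  have fin: "finite (cEq K H `` {s})" for s
    using cEq_sub cU_fin by (blast intro: finite_subset)
  have mem: "s \<in> cU K H \<Longrightarrow> cmap s \<in> cEq K H `` {s}" for s
    unfolding cmap_def using fin cEq_refl by (intro Min_in) auto
  assume "cmap t = cmap t'"
  then have "(t, cmap t) \<in> cEq K H" "(t', cmap t) \<in> cEq K H" using mem[of t] mem[of t'] assms
    by (simp_all del: Image_singleton_iff) (simp_all add: Image_singleton_iff)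
  then show "(t, t') \<in> cEq K H" using cEq_trans cEq_sym by blast
next
  assume "(t, t') \<in> cEq K H"
  then have "cEq K H `` {t} = cEq K H `` {t'}" using cEq_equiv by (simp add: equiv_class_eq)
  then show "cmap t = cmap t'" by (simp add: cmap_def)
qed

lemma cEq_resp:
  assumes "\<And>i. i < length (bout K) \<Longrightarrow> F (lft (bout K ! i)) = F (rgt (bin H ! i))"
    and "(t, t') \<in> cEq K H"
  shows "F t = F t'"
proof -
  have "F x = F y" if "(x, y) \<in> (cR K H \<union> (cR K H)\<inverse>)\<^sup>+" for x y
    using that
  proof (induction rule: trancl_induct)
    case (base y) then show ?case using assms(1) unfolding cR_def by auto
  next
    case (step y z) then show ?case using assms(1) unfolding cR_def by auto
  qed
  then show ?thesis using assms(2) unfolding cEq_def by auto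
qed

lemma bcomp_iso:
  assumes resp: "\<And>i. i < length (bout K) \<Longrightarrow> F (lft (bout K ! i)) = F (rgt (bin H ! i))"
    and ker: "\<And>t t'. t \<in> cU K H \<Longrightarrow> t' \<in> cU K H \<Longrightarrow> F t = F t' \<Longrightarrow> (t, t') \<in> cEq K H"
  shows "biso (bcomp H K) (bimg F (cG K H))"
  unfolding bcomp_cmap
proof (rule quot_iso[OF wf_cG])
  fix x y assume "x \<in> bV (cG K H)" "y \<in> bV (cG K H)"
  then have "x \<in> cU K H" "y \<in> cU K H" by (auto simp: cG_def)
  then show "cmap x = cmap y \<longleftrightarrow> F x = F y"
    using cmap_kernel ker cEq_resp[OF resp] by blast
qed

end

definition Fsplit :: "(nat \<Rightarrow> nat) \<Rightarrow> (nat \<Rightarrow> nat) \<Rightarrow> nat \<Rightarrow> nat" where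
  "Fsplit f1 f2 t = (if even t then f1 (t div 2) else f2 (t div 2))"

lemma Fsplit_lft[simp]: "Fsplit f1 f2 (lft x) = f1 x"
  by (simp add: Fsplit_def lft_def)
lemma Fsplit_rgt[simp]: "Fsplit f1 f2 (rgt x) = f2 x"
  by (simp add: Fsplit_def rgt_def)

lemma bimg_Fsplit_cG:
  "bimg (Fsplit f1 f2) (cG K H) =
    NG (f1 ` bV K \<union> f2 ` bV H) ((\<lambda>e. f1 ` e) ` bE K \<union> (\<lambda>e. f2 ` e) ` bE H)
       (map f1 (bin K)) (map f2 (bout H))"
  by (simp add: bimg_def cG_def cU_def image_Un image_comp comp_def)




lemma fresh_bound: "finite (W::nat set) \<Longrightarrow> \<exists>m. \<forall>w\<in>W. w < m"
  by (intro exI[of _ "Suc (Max (insert 0 W))"]) (auto simp: le_imp_less_Suc)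

lemma cEq_refl_l: "x \<in> bV K \<Longrightarrow> (lft x, lft x) \<in> cEq K H"
  by (auto simp: cEq_def cU_def)
lemma cEq_refl_r: "x \<in> bV H \<Longrightarrow> (rgt x, rgt x) \<in> cEq K H"
  by (auto simp: cEq_def cU_def)
lemma att: "i < length (bout K) \<Longrightarrow> (lft (bout K ! i), rgt (bin H ! i)) \<in> cEq K H"
  unfolding cEq_def cR_def by blast
lemma att': "i < length (bout K) \<Longrightarrow> (rgt (bin H ! i), lft (bout K ! i)) \<in> cEq K H"
  unfolding cEq_def cR_def by blast

context gcat
begin

lemma comp_F:
  assumes KC: "K \<in> C" and HC: "H \<in> C" and len: "length (bout K) = length (bin H)"
    and resp: "\<And>i. i < length (bout K) \<Longrightarrow> f1 (bout K ! i) = f2 (bin H ! i)"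
    and repK: "\<And>x. x \<in> bV K \<Longrightarrow> (lft x, \<rho> (f1 x)) \<in> cEq K H"
    and repH: "\<And>w. w \<in> bV H \<Longrightarrow> (rgt w, \<rho> (f2 w)) \<in> cEq K H"
  shows "NG (f1 ` bV K \<union> f2 ` bV H) ((\<lambda>e. f1 ` e) ` bE K \<union> (\<lambda>e. f2 ` e) ` bE H)
       (map f1 (bin K)) (map f2 (bout H)) \<in> C"
proof -
  have wK: "wf_bgraph K" and wH: "wf_bgraph H" using KC HC wf by auto
  let ?F = "Fsplit f1 f2"
  have rep: "(t, \<rho> (?F t)) \<in> cEq K H" if "t \<in> cU K H" for t
    using that repK repH by (auto simp: cU_def)
  have "biso (bcomp H K) (bimg ?F (cG K H))"
  proof (rule bcomp_iso[OF wK wH len])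
    show "\<And>i. i < length (bout K) \<Longrightarrow> ?F (lft (bout K ! i)) = ?F (rgt (bin H ! i))"
      using resp by simp
    fix t t' assume "t \<in> cU K H" "t' \<in> cU K H" "?F t = ?F t'"
    then show "(t, t') \<in> cEq K H"
      using rep cEq_trans[OF wK wH len] cEq_sym[OF wK wH len] by metis
  qed
  then have "bimg ?F (cG K H) \<in> C" using iso comp[OF KC HC len] by blast
  then show ?thesis by (simp add: bimg_Fsplit_cG)
qed

lemma comp_F2:
  assumes KC: "K \<in> C" and HC: "H \<in> C" and len: "length (bout K) = length (bin H)"
    and resp: "\<And>i. i < length (bout K) \<Longrightarrow> f1 (bout K ! i) = f2 (bin H ! i)"
    and repK: "\<And>x. x \<in> bV K \<Longrightarrow> (lft x, \<rho> (f1 x)) \<in> cEq K H"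
    and cov: "bV H \<subseteq> set (bin H)"
  shows "NG (f1 ` bV K \<union> f2 ` bV H) ((\<lambda>e. f1 ` e) ` bE K \<union> (\<lambda>e. f2 ` e) ` bE H)
       (map f1 (bin K)) (map f2 (bout H)) \<in> C"
proof (rule comp_F[OF KC HC len resp repK])
  have wK: "wf_bgraph K" and wH: "wf_bgraph H" using KC HC wf by auto
  fix w assume "w \<in> bV H"
  then obtain j where j: "j < length (bin H)" "bin H ! j = w"
    using cov by (metis in_set_conv_nth subsetD)
  then have "(rgt w, lft (bout K ! j)) \<in> cEq K H" using cEq_att'[OF wK wH len] len by auto
  moreover have "bout K ! j \<in> bV K" using wK j len unfolding wf_bgraph_def by auto
  ultimately show "(rgt w, \<rho> (f2 w)) \<in> cEq K H"
    using repK[of "bout K ! j"] resp[of j] j len cEq_trans[OF wK wH len] by auto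
qed

lemma comp_NG:
  assumes KC: "NG V1 E1 a1 b1 \<in> C" and HC: "NG V2 E2 a2 b2 \<in> C" and len: "length b1 = length a2"
    and resp: "\<And>i. i < length b1 \<Longrightarrow> f1 (b1 ! i) = f2 (a2 ! i)"
    and repK: "\<And>x. x \<in> V1 \<Longrightarrow> (lft x, \<rho> (f1 x)) \<in> cEq (NG V1 E1 a1 b1) (NG V2 E2 a2 b2)"
    and repH: "\<And>w. w \<in> V2 \<Longrightarrow> (rgt w, \<rho> (f2 w)) \<in> cEq (NG V1 E1 a1 b1) (NG V2 E2 a2 b2)"
  shows "NG (f1 ` V1 \<union> f2 ` V2) ((\<lambda>e. f1 ` e) ` E1 \<union> (\<lambda>e. f2 ` e) ` E2)
       (map f1 a1) (map f2 b2) \<in> C"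
  using comp_F[OF KC HC, of f1 f2 \<rho>] assms by simp

lemma comp_NG2:
  assumes KC: "NG V1 E1 a1 b1 \<in> C" and HC: "NG V2 E2 a2 b2 \<in> C" and len: "length b1 = length a2"
    and resp: "\<And>i. i < length b1 \<Longrightarrow> f1 (b1 ! i) = f2 (a2 ! i)"
    and repK: "\<And>x. x \<in> V1 \<Longrightarrow> (lft x, \<rho> (f1 x)) \<in> cEq (NG V1 E1 a1 b1) (NG V2 E2 a2 b2)"
    and cov: "V2 \<subseteq> set a2"
  shows "NG (f1 ` V1 \<union> f2 ` V2) ((\<lambda>e. f1 ` e) ` E1 \<union> (\<lambda>e. f2 ` e) ` E2)
       (map f1 a1) (map f2 b2) \<in> C"
  using comp_F2[OF KC HC, of f1 f2 \<rho>] assms by simp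

lemma ident: "distinct p \<Longrightarrow> NG (set p) {} p p \<in> C"
proof (induction p)
  case Nil then show ?case using zero by simp
next
  case (Cons x p)
  then have "NG ({x} \<union> set p) ({} \<union> {}) ([x] @ p) ([x] @ p) \<in> C"
    using tensor_named[OF M11[of x] Cons.IH] by simp
  then show ?case by simp
qed

lemma fresh_list:
  assumes "finite (W::nat set)"
  obtains r where "distinct r" "length r = n" "set r \<inter> W = {}"
proof -
  obtain m where m: "\<forall>w\<in>W. w < m" using fresh_bound[OF assms] by blast
  show ?thesis by (rule that[of "[m..<m+n]"]) (use m in auto)
qed

lemma act:
  assumes KC: "NG V E a (b @ q) \<in> C" and PC: "NG W {} p p' \<in> C"
    and cov: "W \<subseteq> set p" and sig: "map \<sigma> p = q"
  shows "NG V E a (b @ map \<sigma> p') \<in> C"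
proof -
  have wK: "wf_bgraph (NG V E a (b @ q))" and wP: "wf_bgraph (NG W {} p p')"
    using KC PC wf by auto
  then have finW: "finite W" and pW: "set p \<subseteq> W" "set p' \<subseteq> W" by (auto simp: wf_NG)
  obtain r where r: "distinct r" "length r = length b" "set r \<inter> W = {}"
    using fresh_list[OF finW] by metis
  have HC: "NG (set r \<union> W) ({} \<union> {}) (r @ p) (r @ p') \<in> C"
    using tensor_named[OF ident[OF r(1)] PC] r(3) by simp
  define f2 where "f2 w = (if w \<in> set r then b ! (THE j. j < length r \<and> r ! j = w) else \<sigma> w)" for w
  have f2r: "f2 (r ! j) = b ! j" if "j < length r" for j
  proof -
    have "(THE j'. j' < length r \<and> r ! j' = r ! j) = j"
      using r(1) that by (auto simp: nth_eq_iff_index_eq)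
    then show ?thesis using that by (simp add: f2_def)
  qed
  have f2W: "f2 w = \<sigma> w" if "w \<in> W" for w using that r(3) by (auto simp: f2_def)
  have len: "length (b @ q) = length (r @ p)"
    using r sig by (auto dest: arg_cong[of _ _ length])
  have resp: "id ((b @ q) ! i) = f2 ((r @ p) ! i)" if "i < length (b @ q)" for i
  proof (cases "i < length b")
    case True then show ?thesis using f2r r by (simp add: nth_append)
  next
    case False
    then have "i - length b < length p" using that sig by (auto dest: arg_cong[of _ _ length])
    then have "p ! (i - length b) \<in> W" "map \<sigma> p ! (i - length b) = \<sigma> (p ! (i - length b))"
      using pW by auto
    then show ?thesis using False r f2W sig by (auto simp: nth_append)
  qed
  have "NG (id ` V \<union> f2 ` (set r \<union> W)) ((\<lambda>e. id ` e) ` E \<union> (\<lambda>e. f2 ` e) ` ({} \<union> {}))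
       (map id a) (map f2 (r @ p')) \<in> C"
    by (rule comp_NG2[OF KC HC, where \<rho> = lft]) (use resp cov len in \<open>auto simp: cEq_refl_l\<close>)
  moreover have "f2 ` (set r \<union> W) \<subseteq> V"
  proof -
    have "f2 ` set r = set b" using f2r r(2) by (force simp: in_set_conv_nth)
    moreover have "f2 ` W = set q" using f2W cov pW sig by force
    ultimately show ?thesis using wK by (auto simp: wf_NG)
  qed
  moreover have "map f2 r = b" using f2r r(2) by (simp add: list_eq_iff_nth_eq)
  moreover have "map f2 p' = map \<sigma> p'" using f2W pW by auto
  ultimately show ?thesis by (simp add: Un_absorb2)
qed

lemma drop_pair:
  assumes "NG V E a (b @ [x, x]) \<in> C"
  shows "NG V E a b \<in> C"
  using act[OF assms M20[of 0], of "\<lambda>_. x"] by simp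

lemma drop_pairs:
  "NG V E a (b @ concat (map (\<lambda>x. [x, x]) xs)) \<in> C \<Longrightarrow> NG V E a b \<in> C"
proof (induction xs rule: rev_induct)
  case Nil then show ?case by simp
next
  case (snoc x xs)
  then show ?case using drop_pair[of V E a "b @ concat (map (\<lambda>x. [x, x]) xs)" x] by simp
qed

end




context gcat
begin

lemma cap:
  assumes KC: "NG V E a (b @ [u, v]) \<in> C" and uv: "u \<noteq> v"
  defines "g \<equiv> \<lambda>x. if x = v then u else x"
  shows "NG (g ` V) ((\<lambda>e. g ` e) ` E) (map g a) (map g b) \<in> C"
proof -
  have wK: "wf_bgraph (NG V E a (b @ [u, v]))" using KC wf by auto
  then have uV: "u \<in> V" "v \<in> V" and bV: "set b \<subseteq> V" by (auto simp: wf_NG)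
  define n where "n = length b"
  have HC: "NG (set [0..<n] \<union> {n}) ({} \<union> {}) ([0..<n] @ [n, n]) ([0..<n] @ []) \<in> C"
    using tensor_named[OF ident[of "[0..<n]"] M20[of n]] by simp
  have wH: "wf_bgraph (NG (set [0..<n] \<union> {n}) ({} \<union> {}) ([0..<n] @ [n, n]) ([0..<n] @ []))"
    using wf[OF HC] .
  define f2 where "f2 w = (if w < n then g (b ! w) else u)" for w
  have len: "length (b @ [u, v]) = length ([0..<n] @ [n, n])" by (simp add: n_def)
  note tr = cEq_trans[OF wK wH] and sy = cEq_sym[OF wK wH]
  have resp: "g ((b @ [u, v]) ! i) = f2 (([0..<n] @ [n, n]) ! i)" if "i < length (b @ [u, v])" for i
  proof -
    consider "i < n" | "i = n" | "i = Suc n" using \<open>i < length (b @ [u, v])\<close> by (force simp: n_def)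
    then show ?thesis
      by cases (auto simp: nth_append f2_def n_def g_def uv)
  qed
  have vu: "(lft v, lft u) \<in> cEq (NG V E a (b @ [u, v])) (NG (set [0..<n] \<union> {n}) ({} \<union> {}) ([0..<n] @ [n, n]) ([0..<n] @ []))"
  proof -
    have 1: "(lft v, rgt n) \<in> cEq (NG V E a (b @ [u, v])) (NG (set [0..<n] \<union> {n}) ({} \<union> {}) ([0..<n] @ [n, n]) ([0..<n] @ []))"
      using att[of "Suc n" "NG V E a (b @ [u, v])" "NG (set [0..<n] \<union> {n}) ({} \<union> {}) ([0..<n] @ [n, n]) ([0..<n] @ [])"] by (simp add: n_def nth_append)
    have 2: "(rgt n, lft u) \<in> cEq (NG V E a (b @ [u, v])) (NG (set [0..<n] \<union> {n}) ({} \<union> {}) ([0..<n] @ [n, n]) ([0..<n] @ []))"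
      using att'[of n "NG V E a (b @ [u, v])" "NG (set [0..<n] \<union> {n}) ({} \<union> {}) ([0..<n] @ [n, n]) ([0..<n] @ [])"] by (simp add: n_def nth_append)
    have l: "length (bout (NG V E a (b @ [u, v]))) = length (bin (NG (set [0..<n] \<union> {n}) ({} \<union> {}) ([0..<n] @ [n, n]) ([0..<n] @ [])))"
      using len by simp
    show ?thesis using tr[OF l 1 2] .
  qed
  have "NG (g ` V \<union> f2 ` (set [0..<n] \<union> {n})) ((\<lambda>e. g ` e) ` E \<union> (\<lambda>e. f2 ` e) ` ({} \<union> {}))
       (map g a) (map f2 ([0..<n] @ [])) \<in> C"
  proof (rule comp_NG2[OF KC HC, where \<rho> = lft])
    show "length (b @ [u, v]) = length ([0..<n] @ [n, n])" by (rule len)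
    show "\<And>i. i < length (b @ [u, v]) \<Longrightarrow> g ((b @ [u, v]) ! i) = f2 (([0..<n] @ [n, n]) ! i)"
      by (rule resp)
    show "set [0..<n] \<union> {n} \<subseteq> set ([0..<n] @ [n, n])" by auto
    fix x assume "x \<in> V"
    then show "(lft x, lft (g x)) \<in> cEq (NG V E a (b @ [u, v])) (NG (set [0..<n] \<union> {n}) ({} \<union> {}) ([0..<n] @ [n, n]) ([0..<n] @ []))"
      using vu by (cases "x = v") (auto simp: g_def cEq_refl_l)
  qed
  moreover have "f2 ` (set [0..<n] \<union> {n}) \<subseteq> g ` V"
    using bV uV by (auto simp: f2_def n_def g_def uv)
  moreover have "map f2 [0..<n] = map g b"
    by (rule nth_equalityI) (simp_all add: f2_def n_def)
  ultimately show ?thesis by (simp add: insert_absorb Un_absorb2)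
qed

lemma bend:
  assumes KC: "NG V E (a @ [x]) b \<in> C"
  shows "NG V E a (b @ [x]) \<in> C"
proof -
  have wK: "wf_bgraph (NG V E (a @ [x]) b)" using KC wf by auto
  then have fin: "finite V" and xV: "x \<in> V" and aV: "set a \<subseteq> V" and bV: "set b \<subseteq> V"
    and EV: "\<forall>e\<in>E. e \<subseteq> V" by (auto simp: wf_NG)
  obtain y where y: "y \<notin> V" using fresh_bound[OF fin] by blast
  have KxC: "NG (V \<union> {y}) (E \<union> {}) ((a @ [x]) @ [y]) (b @ [y]) \<in> C"
    using tensor_named[OF KC M11[of y]] y by simp
  define n where "n = length a"
  have RC: "NG (set [0..<n] \<union> {n}) ({} \<union> {}) ([0..<n] @ []) ([0..<n] @ [n, n]) \<in> C"
    using tensor_named[OF ident[of "[0..<n]"] M02[of n]] by simp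
  let ?R = "NG (set [0..<n] \<union> {n}) ({} \<union> {}) ([0..<n] @ []) ([0..<n] @ [n, n])"
  let ?K = "NG (V \<union> {y}) (E \<union> {}) ((a @ [x]) @ [y]) (b @ [y])"
  have wR: "wf_bgraph ?R" and wKx: "wf_bgraph ?K" using wf RC KxC by auto
  note tr = cEq_trans[OF wR wKx]
  define f1 where "f1 w = (if w < n then a ! w else x)" for w
  define f2 where "f2 w = (if w = y then x else w)" for w
  have len: "length ([0..<n] @ [n, n]) = length ((a @ [x]) @ [y])" by (simp add: n_def)
  have zx: "(lft n, rgt x) \<in> cEq ?R ?K"
    using att[of n ?R ?K] by (simp add: n_def nth_append)
  have "NG (f1 ` (set [0..<n] \<union> {n}) \<union> f2 ` (V \<union> {y})) ((\<lambda>e. f1 ` e) ` ({} \<union> {}) \<union> (\<lambda>e. f2 ` e) ` (E \<union> {}))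
       (map f1 ([0..<n] @ [])) (map f2 (b @ [y])) \<in> C"
  proof (rule comp_NG[OF RC KxC len, where \<rho> = rgt])
    fix i assume i: "i < length ([0..<n] @ [n, n])"
    consider "i < n" | "i = n" | "i = Suc n" using i by force
    then show "f1 (([0..<n] @ [n, n]) ! i) = f2 (((a @ [x]) @ [y]) ! i)"
    proof cases
      case 1 then have "a ! i \<in> V" using aV by (auto simp: n_def)
      then show ?thesis using 1 y by (auto simp: nth_append f1_def f2_def n_def)
    qed (use xV y in \<open>auto simp: nth_append f1_def f2_def n_def\<close>)
  next
    fix w assume w: "w \<in> set [0..<n] \<union> {n}"
    show "(lft w, rgt (f1 w)) \<in> cEq ?R ?K"
    proof (cases "w < n")
      case True
      then show ?thesis using att[of w ?R ?K] by (simp add: nth_append f1_def n_def)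
    next
      case False then have "w = n" using w by auto
      then show ?thesis using zx by (simp add: f1_def)
    qed
  next
    fix w assume w: "w \<in> V \<union> {y}"
    show "(rgt w, rgt (f2 w)) \<in> cEq ?R ?K"
    proof (cases "w = y")
      case True
      have ry: "(rgt y, lft n) \<in> cEq ?R ?K"
        using att'[of "Suc n" ?R ?K] by (simp add: n_def nth_append)
      have l: "length (bout ?R) = length (bin ?K)" using len by simp
      from tr[OF l ry zx] show ?thesis using True by (simp add: f2_def)
    next
      case False then show ?thesis using w by (simp add: f2_def cEq_refl_r)
    qed
  qed
  moreover have "f1 ` (set [0..<n] \<union> {n}) \<union> f2 ` (V \<union> {y}) = V"
  proof -
    have "f1 ` (set [0..<n] \<union> {n}) \<subseteq> V" using aV xV by (auto simp: f1_def n_def)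
    moreover have "f2 ` (V \<union> {y}) = V" using xV y by (auto simp: f2_def)
    ultimately show ?thesis by blast
  qed
  moreover have "(\<lambda>e. f1 ` e) ` ({} \<union> {}) \<union> (\<lambda>e. f2 ` e) ` (E \<union> {}) = E"
  proof -
    have "f2 ` e = e" if "e \<in> E" for e using EV that y by (force simp: f2_def)
    then show ?thesis by force
  qed
  moreover have "map f1 ([0..<n] @ []) = a" by (rule nth_equalityI) (simp_all add: f1_def n_def)
  moreover have "map f2 (b @ [y]) = b @ [x]" using bV y by (auto simp: f2_def intro!: map_idI)
  ultimately show ?thesis by (simp only:)
qed

end




definition dbl :: "nat list \<Rightarrow> nat list" where
  "dbl xs = concat (map (\<lambda>x. [x, x]) xs)"

lemma dbl_simps[simp]: "dbl [] = []" "dbl (x # xs) = x # x # dbl xs"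
  "dbl (xs @ ys) = dbl xs @ dbl ys" "set (dbl xs) = set xs" "rev (dbl xs) = dbl (rev xs)"
  "map f (dbl xs) = dbl (map f xs)"
  by (induction xs) (auto simp: dbl_def)

context gcat
begin

lemma unbend:
  assumes "NG V E a (b @ [x]) \<in> C" shows "NG V E (a @ [x]) b \<in> C"
  using inv_NG[OF bend[OF inv_NG[OF assms]]] .

lemma bend_list:
  "NG V E (a @ c) b \<in> C \<Longrightarrow> NG V E a (b @ rev c) \<in> C"
proof (induction c arbitrary: b rule: rev_induct)
  case Nil then show ?case by simp
next
  case (snoc x c)
  then have "NG V E (a @ c) (b @ [x]) \<in> C" using bend[of V E "a @ c" x b] by simp
  then show ?case using snoc.IH[of "b @ [x]"] by simp
qed

lemma unbend_list:
  "NG V E a (b @ c) \<in> C \<Longrightarrow> NG V E (a @ rev c) b \<in> C"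
proof (induction c arbitrary: a b)
  case Nil then show ?case by simp
next
  case (Cons x c)
  then have "NG V E (a @ rev c) (b @ [x]) \<in> C" using Cons.IH[of a "b @ [x]"] by simp
  then show ?case using unbend[of V E "a @ rev c" b x] by simp
qed

lemma act_mid:
  assumes KC: "NG V E a (b @ q @ c) \<in> C" and PC: "NG W {} p p' \<in> C"
    and cov: "W \<subseteq> set p" and sig: "map \<sigma> p = q"
  shows "NG V E a (b @ map \<sigma> p' @ c) \<in> C"
proof -
  have "NG V E (a @ rev c) (b @ q) \<in> C" using unbend_list[of V E a "b @ q" c] KC by simp
  then have "NG V E (a @ rev c) (b @ map \<sigma> p') \<in> C" by (rule act[OF _ PC cov sig])
  then show ?thesis using bend_list[of V E a "rev c" "b @ map \<sigma> p'"] by simp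
qed

lemma cap_mid:
  assumes KC: "NG V E a (b @ [u, v] @ c) \<in> C" and uv: "u \<noteq> v"
  defines "g \<equiv> \<lambda>x. if x = v then u else x"
  shows "NG (g ` V) ((\<lambda>e. g ` e) ` E) (map g a) (map g b @ map g c) \<in> C"
proof -
  have "NG V E (a @ rev c) (b @ [u, v]) \<in> C" using unbend_list[of V E a "b @ [u, v]" c] KC by simp
  from cap[OF this uv] have "NG (g ` V) ((\<lambda>e. g ` e) ` E) (map g a @ rev (map g c)) (map g b) \<in> C"
    by (simp add: g_def rev_map)
  then show ?thesis using bend_list[of "g ` V" _ "map g a" "rev (map g c)" "map g b"] by simp
qed

lemma drop_pairs_mid:
  "NG V E a (b @ dbl xs @ c) \<in> C \<Longrightarrow> NG V E a (b @ c) \<in> C"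
proof -
  assume "NG V E a (b @ dbl xs @ c) \<in> C"
  then have "NG V E (a @ rev c) (b @ dbl xs) \<in> C" using unbend_list[of V E a "b @ dbl xs" c] by simp
  then have "NG V E (a @ rev c) b \<in> C" using drop_pairs by (simp add: dbl_def)
  then show ?thesis using bend_list[of V E a "rev c" b] by simp
qed

end

locale gcatP = gcat +
  assumes PgtC: "Pgt \<in> C"
begin

lemma Pgt_NG: "NG {0, 1} {} [0, 1, 1] [1, 1, 0] \<in> C"
  using PgtC by (simp add: Pgt_def)

lemma swap:
  assumes "NG V E a (b @ [x, y, y] @ c) \<in> C" shows "NG V E a (b @ [y, y, x] @ c) \<in> C"
  using act_mid[OF assms Pgt_NG, of "\<lambda>i. if i = 0 then x else y"] by simp

lemma swap_back:
  assumes "NG V E a (b @ [y, y, x] @ c) \<in> C" shows "NG V E a (b @ [x, y, y] @ c) \<in> C"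
  using act_mid[OF assms inv_NG[OF Pgt_NG], of "\<lambda>i. if i = 0 then x else y"] by simp

lemma pair_left:
  "NG V E a (b @ l @ [y, y] @ c) \<in> C \<Longrightarrow> NG V E a (b @ [y, y] @ l @ c) \<in> C"
proof (induction l arbitrary: c rule: rev_induct)
  case Nil then show ?case by simp
next
  case (snoc x l)
  then have "NG V E a ((b @ l) @ [x, y, y] @ c) \<in> C" by simp
  then have "NG V E a ((b @ l) @ [y, y, x] @ c) \<in> C" by (rule swap)
  then show ?case using snoc.IH[of "x # c"] by simp
qed

lemma pair_right:
  "NG V E a (b @ [y, y] @ l @ c) \<in> C \<Longrightarrow> NG V E a (b @ l @ [y, y] @ c) \<in> C"
proof (induction l arbitrary: b)
  case Nil then show ?case by simp
next
  case (Cons x l)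
  then have "NG V E a (b @ [y, y, x] @ (l @ c)) \<in> C" by simp
  then have "NG V E a (b @ [x, y, y] @ (l @ c)) \<in> C" by (rule swap_back)
  then show ?case using Cons.IH[of "b @ [x]"] by simp
qed

lemma pairs_left:
  "NG V E a (b @ l @ dbl xs @ c) \<in> C \<Longrightarrow> NG V E a (b @ dbl xs @ l @ c) \<in> C"
proof (induction xs arbitrary: b)
  case Nil then show ?case by simp
next
  case (Cons x xs)
  then have "NG V E a (b @ l @ [x, x] @ (dbl xs @ c)) \<in> C" by simp
  then have "NG V E a (b @ [x, x] @ l @ (dbl xs @ c)) \<in> C" by (rule pair_left)
  then show ?case using Cons.IH[of "b @ [x, x]"] by simp
qed

lemma pairs_right:
  "NG V E a (b @ dbl xs @ l @ c) \<in> C \<Longrightarrow> NG V E a (b @ l @ dbl xs @ c) \<in> C"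
proof (induction xs arbitrary: c rule: rev_induct)
  case Nil then show ?case by simp
next
  case (snoc x xs)
  then have "NG V E a ((b @ dbl xs) @ [x, x] @ l @ c) \<in> C" by simp
  then have "NG V E a ((b @ dbl xs) @ l @ [x, x] @ c) \<in> C" by (rule pair_right)
  then show ?case using snoc.IH[of "[x, x] @ c"] by simp
qed

lemma M13: "NG {1} {} [1] [1, 1, 1] \<in> C"
proof -
  have "NG {0, 1} {} [0, 1, 1] ([1] @ [1, 0]) \<in> C" using Pgt_NG by simp
  from cap[OF this] have "NG {1} {} [1, 1, 1] [1] \<in> C" by simp
  then show ?thesis by (rule inv_NG)
qed

lemma dup_mid:
  assumes "NG V E a (b @ [x] @ c) \<in> C" shows "NG V E a (b @ [x, x, x] @ c) \<in> C"
  using act_mid[OF assms M13, of "\<lambda>_. x"] by simp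

lemma addpair:
  assumes KC: "NG V E a b \<in> C" and x: "x \<in> set a \<union> set b"
  shows "NG V E a (b @ [x, x]) \<in> C"
proof (cases "x \<in> set b")
  case True
  then obtain b1 b2 where b: "b = b1 @ [x] @ b2" by (metis split_list append_Cons append_Nil)
  then have "NG V E a (b1 @ [x, x, x] @ b2) \<in> C" using dup_mid KC by simp
  then have "NG V E a ((b1 @ [x]) @ [x, x] @ b2 @ []) \<in> C" by simp
  then have "NG V E a ((b1 @ [x]) @ b2 @ [x, x] @ []) \<in> C" by (rule pair_right)
  then show ?thesis using b by simp
next
  case False
  then have "x \<in> set a" using x by auto
  then obtain a1 a2 where a: "a = a1 @ [x] @ a2" by (metis split_list append_Cons append_Nil)
  then have "NG V E a1 (b @ rev a2 @ [x]) \<in> C" using bend_list[of V E a1 "[x] @ a2" b] KC by simp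
  then have "NG V E a1 ((b @ rev a2) @ [x, x, x] @ []) \<in> C" using dup_mid[of V E a1 "b @ rev a2" x "[]"] by simp
  then have "NG V E a1 (b @ (rev a2 @ [x]) @ [x, x] @ []) \<in> C" by simp
  then have "NG V E a1 (b @ [x, x] @ (rev a2 @ [x]) @ []) \<in> C" by (rule pair_left)
  then have "NG V E (a1 @ rev (rev a2 @ [x])) (b @ [x, x]) \<in> C"
    using unbend_list[of V E a1 "b @ [x, x]" "rev a2 @ [x]"] by simp
  then show ?thesis using a by simp
qed

lemma merge_out:
  assumes KC: "NG V E a b \<in> C" and u: "u \<in> set a \<union> set b" and v: "v \<in> set b" and uv: "u \<noteq> v"
  defines "g \<equiv> \<lambda>x. if x = v then u else x"
  shows "NG (g ` V) ((\<lambda>e. g ` e) ` E) (map g a) (map g b) \<in> C"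
proof -
  obtain b1 b2 where b: "b = b1 @ [v] @ b2" using v by (metis split_list append_Cons append_Nil)
  have "NG V E a (b1 @ ([v] @ b2) @ [u, u] @ []) \<in> C" using addpair[OF KC u] b by simp
  then have "NG V E a (b1 @ [u, u] @ ([v] @ b2) @ []) \<in> C" by (rule pair_left)
  then have "NG V E a ((b1 @ [u]) @ [u, v] @ b2) \<in> C" by simp
  from cap_mid[OF this uv] have "NG (g ` V) ((\<lambda>e. g ` e) ` E) (map g a) (map g (b1 @ [u]) @ map g b2) \<in> C"
    by (simp add: g_def)
  moreover have "map g b = map g (b1 @ [u]) @ map g b2" using b uv by (simp add: g_def)
  ultimately show ?thesis by simp
qed

lemma merge:
  assumes KC: "NG V E a b \<in> C" and u: "u \<in> set a \<union> set b" and v: "v \<in> set a \<union> set b" and uv: "u \<noteq> v"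
  defines "g \<equiv> \<lambda>x. if x = v then u else x"
  shows "NG (g ` V) ((\<lambda>e. g ` e) ` E) (map g a) (map g b) \<in> C"
proof (cases "v \<in> set b")
  case True then show ?thesis using merge_out[OF KC u True uv] by (simp add: g_def)
next
  case False
  then have "v \<in> set a" using v by auto
  then obtain a1 a2 where a: "a = a1 @ [v] @ a2" by (metis split_list append_Cons append_Nil)
  then have K1: "NG V E a1 (b @ rev a2 @ [v]) \<in> C" using bend_list[of V E a1 "[v] @ a2" b] KC by simp
  have "u \<in> set a1 \<union> set (b @ rev a2 @ [v])" using u a by auto
  from merge_out[OF K1 this _ uv]
  have "NG (g ` V) ((\<lambda>e. g ` e) ` E) (map g a1) (map g b @ rev (map g ([v] @ a2))) \<in> C"
    by (simp add: g_def rev_map)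
  then have "NG (g ` V) ((\<lambda>e. g ` e) ` E) (map g a1 @ map g ([v] @ a2)) (map g b) \<in> C"
    using unbend_list[of "g ` V" _ "map g a1" "map g b" "rev (map g ([v] @ a2))"] by simp
  then show ?thesis using a by simp
qed

lemma subst_full:
  assumes "K \<in> C" "bV K \<subseteq> set (bin K) \<union> set (bout K)"
  shows "bimg h K \<in> C"
  using assms
proof (induction "card (bV K)" arbitrary: K rule: less_induct)
  case less
  show ?case
  proof (cases "inj_on h (bV K)")
    case True then show ?thesis using rename[OF less.prems(1)] by blast
  next
    case False
    then obtain u v where uv: "u \<in> bV K" "v \<in> bV K" "u \<noteq> v" "h u = h v"
      unfolding inj_on_def by blast
    define g where "g = (\<lambda>x. if x = v then u else x)"
    have wK: "wf_bgraph K" using less.prems wf by auto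
    have KC: "NG (bV K) (bE K) (bin K) (bout K) \<in> C" using less.prems(1) by (cases K) simp
    have K1: "bimg g K \<in> C"
      using merge[OF KC _ _ uv(3)] uv less.prems(2) by (auto simp: bimg_def g_def)
    have fin: "finite (bV K)" using wK by (simp add: wf_bgraph_def)
    have "bV (bimg g K) \<subseteq> bV K - {v}" using uv by (auto simp: bimg_def g_def)
    then have "card (bV (bimg g K)) < card (bV K)"
      using fin uv by (meson card_mono card_Diff1_less finite_Diff le_less_trans)
    moreover have "bV (bimg g K) \<subseteq> set (bin (bimg g K)) \<union> set (bout (bimg g K))"
      using less.prems(2) by (auto simp: bimg_def)
    ultimately have "bimg h (bimg g K) \<in> C" using less.hyps K1 by blast
    moreover have "bimg h (bimg g K) = bimg h K"
      unfolding bimg_comp by (rule bimg_cong[OF wK]) (use uv in \<open>auto simp: g_def\<close>)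
    ultimately show ?thesis by simp
  qed
qed

end




lemma wf_bcomp:
  assumes "wf_bgraph K" "wf_bgraph H" "length (bout K) = length (bin H)"
  shows "wf_bgraph (bcomp H K)"
  unfolding bcomp_cmap[OF assms] by (rule wf_bimg[OF wf_cG[OF assms]])

lemma wf_btensor:
  assumes "wf_bgraph K" "wf_bgraph H"
  shows "wf_bgraph (btensor K H)"
proof -
  have e1: "\<forall>e\<in>(\<lambda>e. lft ` e) ` bE K. e \<subseteq> lft ` bV K \<and> (card e = 1 \<or> card e = 2)"
    using assms(1) unfolding wf_bgraph_def by (auto simp: image_mono)
  have e2: "\<forall>e\<in>(\<lambda>e. rgt ` e) ` bE H. e \<subseteq> rgt ` bV H \<and> (card e = 1 \<or> card e = 2)"
    using assms(2) unfolding wf_bgraph_def by (auto simp: image_mono)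
  have "finite (bV (btensor K H))" using assms by (simp add: wf_bgraph_def btensor_def)
  moreover have "set (bin (btensor K H)) \<subseteq> bV (btensor K H)" "set (bout (btensor K H)) \<subseteq> bV (btensor K H)"
    using assms by (auto simp: wf_bgraph_def btensor_def)
  moreover have "\<forall>e\<in>bE (btensor K H). e \<subseteq> bV (btensor K H) \<and> (card e = 1 \<or> card e = 2)"
  proof
    fix e assume "e \<in> bE (btensor K H)"
    then have "e \<in> (\<lambda>e. lft ` e) ` bE K \<or> e \<in> (\<lambda>e. rgt ` e) ` bE H" by (simp add: btensor_def)
    then show "e \<subseteq> bV (btensor K H) \<and> (card e = 1 \<or> card e = 2)"
    proof
      assume "e \<in> (\<lambda>e. lft ` e) ` bE K" then show ?thesis using e1 by (auto simp: btensor_def)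
    next
      assume "e \<in> (\<lambda>e. rgt ` e) ` bE H" then show ?thesis using e2 by (auto simp: btensor_def)
    qed
  qed
  ultimately show ?thesis unfolding wf_bgraph_def by blast
qed

lemma gc_wf: "graph_category {K. wf_bgraph K}"
  unfolding graph_category_def
proof (intro conjI ballI allI impI)
  fix K L assume "K \<in> {K. wf_bgraph K}" "biso K L"
  then show "L \<in> {K. wf_bgraph K}" unfolding biso_def using wf_bimg by auto
next
  show "bM 1 1 \<in> {K. wf_bgraph K}" "bM 0 2 \<in> {K. wf_bgraph K}" "bzero \<in> {K. wf_bgraph K}"
    by (auto simp: wf_bgraph_def bM_def bzero_def)
next
  fix K H assume "K \<in> {K. wf_bgraph K}" "H \<in> {K. wf_bgraph K}"
  then show "btensor K H \<in> {K. wf_bgraph K}" using wf_btensor by auto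
next
  fix K H assume "K \<in> {K. wf_bgraph K}" "H \<in> {K. wf_bgraph K}" "length (bout K) = length (bin H)"
  then show "bcomp H K \<in> {K. wf_bgraph K}" using wf_bcomp by auto
next
  fix K assume "K \<in> {K. wf_bgraph K}"
  then show "binv K \<in> {K. wf_bgraph K}" by (auto simp: wf_bgraph_def binv_def)
qed (auto)

lemma gc_Inter:
  assumes "\<And>D. D \<in> F \<Longrightarrow> graph_category D" "F \<noteq> {}"
  shows "graph_category (\<Inter>F)"
proof -
  obtain D0 where D0: "D0 \<in> F" using assms(2) by blast
  have g: "\<And>D. D \<in> F \<Longrightarrow> (\<forall>K\<in>D. wf_bgraph K) \<and>
     (\<forall>K\<in>D. \<forall>L. biso K L \<longrightarrow> L \<in> D) \<and>
     bM 1 1 \<in> D \<and> bM 0 2 \<in> D \<and> bzero \<in> D \<and>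
     (\<forall>K\<in>D. \<forall>H\<in>D. btensor K H \<in> D) \<and>
     (\<forall>K\<in>D. \<forall>H\<in>D. length (bout K) = length (bin H) \<longrightarrow> bcomp H K \<in> D) \<and>
     (\<forall>K\<in>D. binv K \<in> D)"
    using assms(1) unfolding graph_category_def by blast
  show ?thesis unfolding graph_category_def
  proof (intro conjI)
    show "\<forall>K\<in>\<Inter>F. wf_bgraph K" using g[OF D0] D0 by blast
    show "\<forall>K\<in>\<Inter>F. \<forall>L. biso K L \<longrightarrow> L \<in> \<Inter>F" using g by blast
    show "bM 1 1 \<in> \<Inter>F" "bM 0 2 \<in> \<Inter>F" "bzero \<in> \<Inter>F" using g by blast+
    show "\<forall>K\<in>\<Inter>F. \<forall>H\<in>\<Inter>F. btensor K H \<in> \<Inter>F" using g by blast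
    show "\<forall>K\<in>\<Inter>F. \<forall>H\<in>\<Inter>F. length (bout K) = length (bin H) \<longrightarrow> bcomp H K \<in> \<Inter>F"
      using g by blast
    show "\<forall>K\<in>\<Inter>F. binv K \<in> \<Inter>F" using g by blast
  qed
qed

lemma gen_gc:
  assumes "\<forall>K\<in>X. wf_bgraph K"
  shows "graph_category (gen_category X)"
  unfolding gen_category_def
proof (rule gc_Inter)
  show "{C. graph_category C \<and> X \<subseteq> C} \<noteq> {}"
    using gc_wf assms by blast
qed auto

lemma gen_least: "graph_category D \<Longrightarrow> X \<subseteq> D \<Longrightarrow> gen_category X \<subseteq> D"
  unfolding gen_category_def by blast

lemma gen_sup: "X \<subseteq> gen_category X"
  unfolding gen_category_def by blast

lemma qaddpair:
  assumes gt: "group_theoretical C" and KC: "NG V E a b \<in> C" and x: "x \<in> V"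
  shows "NG V E a (b @ [x, x]) \<in> C"
proof -
  interpret gcat C using gt by (unfold_locales) (simp add: group_theoretical_def)
  have wK: "wf_bgraph (NG V E a b)" using KC wf by auto
  then have fin: "finite V" and EV: "\<forall>e\<in>E. e \<subseteq> V" by (auto simp: wf_NG)
  obtain m where m: "\<forall>w\<in>V. w < m" using fresh_bound[OF fin] by blast
  define z where "z = m"
  have zV: "z \<notin> V" and xz: "x < z" using m x by (auto simp: z_def)
  have T1: "NG (V \<union> {z}) (E \<union> {}) (a @ []) (b @ [z, z]) \<in> C"
    using tensor_named[OF KC M02[of z]] zV by simp
  define P where "P = {{x, z}} \<union> (\<lambda>v. {v}) ` (V - {x})"
  have part: "partition_on (V \<union> {z}) P"
    unfolding P_def using x zV by (intro partition_onI) (auto simp: disjnt_def)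
  have "bquot (NG (V \<union> {z}) (E \<union> {}) (a @ []) (b @ [z, z])) P \<in> C"
    using gt T1 part unfolding group_theoretical_def by fastforce
  moreover have "bquot (NG (V \<union> {z}) (E \<union> {}) (a @ []) (b @ [z, z])) P =
      bimg (\<lambda>v. if v = z then x else v) (NG (V \<union> {z}) (E \<union> {}) (a @ []) (b @ [z, z]))"
    unfolding bquot_def
  proof (rule bimg_cong)
    show "wf_bgraph (NG (V \<union> {z}) (E \<union> {}) (a @ []) (b @ [z, z]))" using wf T1 by blast
    fix v assume v: "v \<in> bV (NG (V \<union> {z}) (E \<union> {}) (a @ []) (b @ [z, z]))"
    show "Min (\<Union>{B \<in> P. v \<in> B}) = (if v = z then x else v)"
    proof (cases "v = x \<or> v = z")
      case True
      then have "{B \<in> P. v \<in> B} = {{x, z}}" using zV by (auto simp: P_def)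
      then show ?thesis using True xz by auto
    next
      case False
      then have "{B \<in> P. v \<in> B} = {{v}}" using v by (auto simp: P_def)
      then show ?thesis using False by auto
    qed
  qed
  moreover have "bimg (\<lambda>v. if v = z then x else v) (NG (V \<union> {z}) (E \<union> {}) (a @ []) (b @ [z, z]))
     = NG V E a (b @ [x, x])"
  proof -
    have "(\<lambda>v. if v = z then x else v) ` e = e" if "e \<in> E" for e
      using EV that zV by force
    then have "(\<lambda>e. (\<lambda>v. if v = z then x else v) ` e) ` E = E" by force
    moreover have "(\<lambda>v. if v = z then x else v) ` (V \<union> {z}) = V" using x zV by auto
    moreover have "map (\<lambda>v. if v = z then x else v) a = a" "map (\<lambda>v. if v = z then x else v) b = b"
      using wK zV by (auto simp: wf_NG intro!: map_idI)
    ultimately show ?thesis by (simp add: bimg_NG)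
  qed
  ultimately show ?thesis by simp
qed

lemma Pgt_in_gt:
  assumes gt: "group_theoretical C"
  shows "Pgt \<in> C"
proof -
  interpret gcat C using gt by (unfold_locales) (simp add: group_theoretical_def)
  have "NG ({2} \<union> ({0} \<union> {1})) ({} \<union> ({} \<union> {})) ([] @ ([0] @ [1, 1])) ([2, 2] @ ([0] @ [])) \<in> C"
    using tensor_named[OF M02[of 2] tensor_named[OF M11[of 0] M20[of 1]]] by simp
  then have W: "NG {0, 1, 2} {} [0, 1, 1] [2, 2, 0] \<in> C" by (simp add: insert_commute)
  define P :: "nat set set" where "P = {{0}, {1, 2}}"
  have part: "partition_on {0, 1, 2} P"
    unfolding P_def by (intro partition_onI) (auto simp: disjnt_def)
  have "bquot (NG {0, 1, 2} {} [0, 1, 1] [2, 2, 0]) P \<in> C"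
    using gt W part unfolding group_theoretical_def by fastforce
  moreover have "bquot (NG {0, 1, 2} {} [0, 1, 1] [2, 2, 0]) P =
     bimg (\<lambda>v. if v = 0 then 0 else 1) (NG {0, 1, 2} {} [0, 1, 1] [2, 2, 0])"
    unfolding bquot_def
  proof (rule bimg_cong)
    show "wf_bgraph (NG {0, 1, 2} {} [0, 1, 1] [2, 2, 0])" using wf W by blast
    fix v assume v: "v \<in> bV (NG {0, 1, 2} {} [0, 1, 1] [2, 2, 0])"
    then have "v = 0 \<or> v = 1 \<or> v = 2" by auto
    then show "Min (\<Union>{B \<in> P. v \<in> B}) = (if v = 0 then 0 else 1)"
    proof (elim disjE)
      assume "v = 0" then have "{B \<in> P. v \<in> B} = {{0}}" by (auto simp: P_def)
      then show ?thesis using \<open>v = 0\<close> by simp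
    next
      assume "v = 1" then have "{B \<in> P. v \<in> B} = {{1, 2}}" by (auto simp: P_def)
      then show ?thesis using \<open>v = 1\<close> by simp
    next
      assume "v = 2" then have "{B \<in> P. v \<in> B} = {{1, 2}}" by (auto simp: P_def)
      then show ?thesis using \<open>v = 2\<close> by simp
    qed
  qed
  moreover have "bimg (\<lambda>v. if v = 0 then 0 else 1) (NG {0, 1, 2} {} [0, 1, 1] [2, 2, 0]) = Pgt"
    by (simp add: bimg_NG Pgt_def insert_commute)
  ultimately show ?thesis by simp
qed

lemma forward:
  assumes gt: "group_theoretical C"
  shows "\<exists>S. (\<forall>K\<in>S. wf_bgraph K \<and> bV K \<subseteq> set (bin K) \<union> set (bout K)) \<and>
         C = gen_category (S \<union> {Pgt})"
proof -
  have gcC: "graph_category C" using gt by (simp add: group_theoretical_def)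
  interpret gcat C using gcC by unfold_locales
  define S where "S = {K \<in> C. bV K \<subseteq> set (bin K) \<union> set (bout K)}"
  have Swf: "\<forall>K\<in>S. wf_bgraph K \<and> bV K \<subseteq> set (bin K) \<union> set (bout K)"
    using wf by (auto simp: S_def)
  have X: "S \<union> {Pgt} \<subseteq> C" using Pgt_in_gt[OF gt] by (auto simp: S_def)
  have Xwf: "\<forall>K\<in>S \<union> {Pgt}. wf_bgraph K" using X wf by blast
  interpret G: gcat "gen_category (S \<union> {Pgt})" using gen_gc[OF Xwf] by unfold_locales
  have "C \<subseteq> gen_category (S \<union> {Pgt})"
  proof
    fix K assume KC: "K \<in> C"
    have ext: "NG (bV K) (bE K) (bin K) (bout K @ dbl xs) \<in> C" if "set xs \<subseteq> bV K" for xs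
      using that
    proof (induction xs rule: rev_induct)
      case Nil then show ?case using KC by (cases K) simp
    next
      case (snoc x xs)
      then show ?case using qaddpair[OF gt snoc.IH, of x] by simp
    qed
    have fin: "finite (bV K)" using wf[OF KC] by (simp add: wf_bgraph_def)
    define xs where "xs = sorted_list_of_set (bV K)"
    have sx: "set xs = bV K" using fin by (simp add: xs_def)
    have "NG (bV K) (bE K) (bin K) (bout K @ dbl xs) \<in> S"
      using ext[of xs] sx by (auto simp: S_def)
    then have "NG (bV K) (bE K) (bin K) (bout K @ dbl xs) \<in> gen_category (S \<union> {Pgt})"
      using gen_sup by blast
    then have "NG (bV K) (bE K) (bin K) (bout K) \<in> gen_category (S \<union> {Pgt})"
      by (rule G.drop_pairs[unfolded dbl_def[symmetric]])
    then show "K \<in> gen_category (S \<union> {Pgt})" by (cases K) simp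
  qed
  moreover have "gen_category (S \<union> {Pgt}) \<subseteq> C" using gen_least[OF gcC X] .
  ultimately show ?thesis using Swf by blast
qed




context gcat
begin

definition Tset :: "bgraph set" where
  "Tset = {K \<in> C. \<exists>us. set us = bV K \<and> NG (bV K) (bE K) (bin K) (bout K @ dbl us) \<in> C}"

lemma T_comp:
  assumes KT: "K \<in> Tset" and HT: "H \<in> Tset" and len: "length (bout K) = length (bin H)"
  shows "bcomp H K \<in> Tset"
proof -
  have KC: "K \<in> C" and HC: "H \<in> C" using KT HT by (auto simp: Tset_def)
  have wK: "wf_bgraph K" and wH: "wf_bgraph H" using KC HC wf by auto
  obtain uk where uk: "set uk = bV K" and XK: "NG (bV K) (bE K) (bin K) (bout K @ dbl uk) \<in> C"
    using KT by (auto simp: Tset_def)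
  obtain uh where uh: "set uh = bV H" and XH: "NG (bV H) (bE H) (bin H) (bout H @ dbl uh) \<in> C"
    using HT by (auto simp: Tset_def)
  have BC: "bcomp H K \<in> C" using comp[OF KC HC len] .
  define n where "n = length (dbl uk)"
  have finH: "finite (bV H)" using wH by (simp add: wf_bgraph_def)
  obtain p where p: "distinct p" "length p = n" "set p \<inter> bV H = {}"
    using fresh_list[OF finH] by metis
  have YC: "NG (bV H \<union> set p) (bE H \<union> {}) (bin H @ p) ((bout H @ dbl uh) @ p) \<in> C"
    using tensor_named[OF XH ident[OF p(1)]] p(3) by (simp add: Int_commute)
  let ?KX = "NG (bV K) (bE K) (bin K) (bout K @ dbl uk)"
  let ?HY = "NG (bV H \<union> set p) (bE H \<union> {}) (bin H @ p) ((bout H @ dbl uh) @ p)"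
  have wKX: "wf_bgraph ?KX" and wHY: "wf_bgraph ?HY" using XK YC wf by auto
  have lenXY: "length (bout K @ dbl uk) = length (bin H @ p)" using len p(2) n_def by simp
  have lenXY': "length (bout ?KX) = length (bin ?HY)" using lenXY by simp
  define \<kappa> where "\<kappa> = cmap K H"
  define f1 where "f1 x = \<kappa> (lft x)" for x
  define f2 where "f2 w = (if w \<in> set p then f1 (dbl uk ! (THE j. j < n \<and> p ! j = w)) else \<kappa> (rgt w))" for w
  have f2p: "f2 (p ! j) = f1 (dbl uk ! j)" if "j < n" for j
  proof -
    have "(THE j'. j' < n \<and> p ! j' = p ! j) = j"
      using p that by (auto simp: nth_eq_iff_index_eq)
    then show ?thesis using that p by (simp add: f2_def)
  qed
  have f2V: "f2 w = \<kappa> (rgt w)" if "w \<in> bV H" for w using that p(3) by (auto simp: f2_def)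
  have Sub: "cEq K H \<subseteq> cEq ?KX ?HY"
  proof -
    have U: "cU K H \<subseteq> cU ?KX ?HY" by (auto simp: cU_def)
    have R: "cR K H \<subseteq> cR ?KX ?HY"
    proof
      fix r assume "r \<in> cR K H"
      then obtain i where i: "i < length (bout K)" "r = (lft (bout K ! i), rgt (bin H ! i))"
        by (auto simp: cR_def)
      then have "r = (lft ((bout K @ dbl uk) ! i), rgt ((bin H @ p) ! i))" using len by (simp add: nth_append)
      then show "r \<in> cR ?KX ?HY" using i unfolding cR_def by auto
    qed
    have "(cR K H \<union> (cR K H)\<inverse>)\<^sup>+ \<subseteq> (cR ?KX ?HY \<union> (cR ?KX ?HY)\<inverse>)\<^sup>+"
      using R by (intro trancl_mono_subset) auto
    then show ?thesis using U unfolding cEq_def Id_on_def by blast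
  qed
  define \<rho> where "\<rho> z = (SOME t. t \<in> cU K H \<and> \<kappa> t = z)" for z
  have key: "(t, \<rho> (\<kappa> t)) \<in> cEq ?KX ?HY" if t: "t \<in> cU K H" for t
  proof -
    have "\<rho> (\<kappa> t) \<in> cU K H \<and> \<kappa> (\<rho> (\<kappa> t)) = \<kappa> t"
      unfolding \<rho>_def by (rule someI[of _ t]) (use t in simp)
    then have "(t, \<rho> (\<kappa> t)) \<in> cEq K H"
      using cmap_kernel[OF wK wH len t, of "\<rho> (\<kappa> t)"] unfolding \<kappa>_def by simp
    then show ?thesis using Sub by blast
  qed
  have dblV: "set (dbl uk) = bV K" using uk by simp
  have NC: "NG (f1 ` bV K \<union> f2 ` (bV H \<union> set p)) ((\<lambda>e. f1 ` e) ` bE K \<union> (\<lambda>e. f2 ` e) ` (bE H \<union> {}))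
       (map f1 (bin K)) (map f2 ((bout H @ dbl uh) @ p)) \<in> C"
  proof (rule comp_NG[OF XK YC lenXY, where \<rho> = \<rho>])
    fix i assume i: "i < length (bout K @ dbl uk)"
    show "f1 ((bout K @ dbl uk) ! i) = f2 ((bin H @ p) ! i)"
    proof (cases "i < length (bout K)")
      case True
      have "bin H ! i \<in> bV H" using wH True len by (auto simp: wf_bgraph_def)
      moreover have "(lft (bout K ! i), rgt (bin H ! i)) \<in> cEq K H" using att True by blast
      moreover have "bout K ! i \<in> bV K" using wK True by (auto simp: wf_bgraph_def)
      moreover have "lft (bout K ! i) \<in> cU K H" "rgt (bin H ! i) \<in> cU K H"
        using calculation by (auto simp: cU_def)
      ultimately show ?thesis using True len cmap_kernel[OF wK wH len]
        by (auto simp: nth_append f1_def f2V \<kappa>_def)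
    next
      case False
      then have "i - length (bout K) < n" using i n_def by auto
      then show ?thesis using False len f2p by (simp add: nth_append)
    qed
  next
    fix x assume "x \<in> bV K"
    then show "(lft x, \<rho> (f1 x)) \<in> cEq ?KX ?HY" unfolding f1_def by (intro key) (simp add: cU_def)
  next
    fix w assume w: "w \<in> bV H \<union> set p"
    show "(rgt w, \<rho> (f2 w)) \<in> cEq ?KX ?HY"
    proof (cases "w \<in> set p")
      case True
      then obtain j where j: "j < n" "p ! j = w" using p(2) by (auto simp: in_set_conv_nth)
      have a1: "(rgt w, lft (dbl uk ! j)) \<in> cEq ?KX ?HY"
        using att'[of "length (bout K) + j" ?KX ?HY] j len n_def by (simp add: nth_append)
      have "dbl uk ! j \<in> bV K" using j dblV n_def by (metis nth_mem)
      then have a2: "(lft (dbl uk ! j), \<rho> (f1 (dbl uk ! j))) \<in> cEq ?KX ?HY"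
        unfolding f1_def by (intro key) (simp add: cU_def)
      have "f2 w = f1 (dbl uk ! j)" using f2p[OF j(1)] j(2) by simp
      then show ?thesis using cEq_trans[OF wKX wHY lenXY' a1 a2] by simp
    next
      case False
      then have "w \<in> bV H" using w by auto
      then show ?thesis using key[of "rgt w"] by (simp add: f2V cU_def)
    qed
  qed
  define us' where "us' = map (\<lambda>w. \<kappa> (rgt w)) uh @ map f1 uk"
  have B: "bcomp H K = bimg \<kappa> (cG K H)" using bcomp_cmap[OF wK wH len] by (simp add: \<kappa>_def)
  have eqV: "f1 ` bV K \<union> f2 ` (bV H \<union> set p) = bV (bcomp H K)"
  proof -
    have "f2 ` set p \<subseteq> f1 ` bV K"
    proof
      fix y assume "y \<in> f2 ` set p"
      then obtain j where j: "j < n" "y = f2 (p ! j)" using p(2) by (auto simp: in_set_conv_nth)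
      then show "y \<in> f1 ` bV K" using f2p dblV n_def by (metis image_eqI nth_mem)
    qed
    moreover have "f2 ` bV H = (\<lambda>w. \<kappa> (rgt w)) ` bV H" using f2V by auto
    ultimately have "f1 ` bV K \<union> f2 ` (bV H \<union> set p) = (\<lambda>x. \<kappa> (lft x)) ` bV K \<union> (\<lambda>w. \<kappa> (rgt w)) ` bV H"
      unfolding f1_def by blast
    then show ?thesis unfolding B by (simp add: bimg_def cG_def cU_def image_Un image_comp comp_def)
  qed
  have eqE: "(\<lambda>e. f1 ` e) ` bE K \<union> (\<lambda>e. f2 ` e) ` (bE H \<union> {}) = bE (bcomp H K)"
  proof -
    have "f2 ` e = \<kappa> ` rgt ` e" if "e \<in> bE H" for e
    proof -
      have "e \<subseteq> bV H" using wH that by (auto simp: wf_bgraph_def)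
      then show ?thesis using f2V by (force simp: image_iff)
    qed
    then have "(\<lambda>e. f2 ` e) ` bE H = (\<lambda>e. \<kappa> ` rgt ` e) ` bE H" by (rule image_cong[OF refl])
    then show ?thesis unfolding B by (simp add: bimg_def cG_def image_Un image_comp f1_def comp_def)
  qed
  have eqA: "map f1 (bin K) = bin (bcomp H K)" unfolding B by (simp add: bimg_def cG_def f1_def comp_def)
  have eqB: "map f2 ((bout H @ dbl uh) @ p) = bout (bcomp H K) @ dbl us'"
  proof -
    have "map f2 (bout H) = map (\<lambda>w. \<kappa> (rgt w)) (bout H)" using wH f2V by (auto simp: wf_bgraph_def)
    moreover have "dbl (map f2 uh) = dbl (map (\<lambda>w. \<kappa> (rgt w)) uh)"
    proof -
      have m: "map f2 uh = map (\<lambda>w. \<kappa> (rgt w)) uh" using uh f2V by auto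
      show ?thesis by (simp only: m)
    qed
    moreover have "map f2 p = map f1 (dbl uk)"
      by (rule nth_equalityI) (use p(2) n_def f2p in \<open>simp_all del: dbl_simps\<close>)
    ultimately show ?thesis unfolding B by (simp add: bimg_def cG_def us'_def comp_def)
  qed
  have sus: "set us' = bV (bcomp H K)"
  proof -
    have "set us' = (\<lambda>w. \<kappa> (rgt w)) ` bV H \<union> f1 ` bV K" using uh uk by (simp add: us'_def)
    then show ?thesis unfolding B by (auto simp: bimg_def cG_def cU_def f1_def)
  qed
  have "NG (bV (bcomp H K)) (bE (bcomp H K)) (bin (bcomp H K)) (bout (bcomp H K) @ dbl us') \<in> C"
    using NC by (simp only: eqV eqE eqA eqB)
  then show ?thesis using BC sus unfolding Tset_def by blast
qed

end




context gcatP
begin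

lemma full_ext:
  assumes KC: "K \<in> C" and full: "bV K \<subseteq> set (bin K) \<union> set (bout K)"
  shows "set xs \<subseteq> bV K \<Longrightarrow> NG (bV K) (bE K) (bin K) (bout K @ dbl xs) \<in> C"
proof (induction xs rule: rev_induct)
  case Nil then show ?case using KC by (cases K) simp
next
  case (snoc x xs)
  then have "NG (bV K) (bE K) (bin K) (bout K @ dbl xs) \<in> C" by simp
  moreover have "x \<in> set (bin K) \<union> set (bout K @ dbl xs)" using snoc.prems full by auto
  ultimately show ?case using addpair by fastforce
qed

lemma full_T:
  assumes KC: "K \<in> C" and full: "bV K \<subseteq> set (bin K) \<union> set (bout K)"
  shows "K \<in> Tset"
proof -
  have fin: "finite (bV K)" using wf[OF KC] by (simp add: wf_bgraph_def)
  define xs where "xs = sorted_list_of_set (bV K)"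
  have "set xs = bV K" using fin by (simp add: xs_def)
  then show ?thesis using full_ext[OF KC full, of xs] KC unfolding Tset_def by auto
qed

lemma T_iso:
  assumes KT: "K \<in> Tset" and iso: "biso K L"
  shows "L \<in> Tset"
proof -
  have KC: "K \<in> C" using KT by (simp add: Tset_def)
  obtain us where us: "set us = bV K" and X: "NG (bV K) (bE K) (bin K) (bout K @ dbl us) \<in> C"
    using KT by (auto simp: Tset_def)
  obtain f where f: "bij_betw f (bV K) (bV L)" "bimg f K = L" using iso unfolding biso_def by blast
  have LC: "L \<in> C" using KC iso by (rule gcat.iso[OF gcat_axioms])
  have "bimg f (NG (bV K) (bE K) (bin K) (bout K @ dbl us)) \<in> C"
    using rename[OF X] f(1) by (simp add: bij_betw_def)
  moreover have "bimg f (NG (bV K) (bE K) (bin K) (bout K @ dbl us)) =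
     NG (bV L) (bE L) (bin L) (bout L @ dbl (map f us))"
    using f(2) by (auto simp: bimg_def)
  moreover have "set (map f us) = bV L" using us f by (auto simp: bimg_def)
  ultimately show ?thesis using LC unfolding Tset_def by (metis (mono_tags, lifting) mem_Collect_eq)
qed

lemma T_tensor:
  assumes KT: "K \<in> Tset" and HT: "H \<in> Tset"
  shows "btensor K H \<in> Tset"
proof -
  have KC: "K \<in> C" and HC: "H \<in> C" using KT HT by (auto simp: Tset_def)
  obtain uk where uk: "set uk = bV K" and XK: "NG (bV K) (bE K) (bin K) (bout K @ dbl uk) \<in> C"
    using KT by (auto simp: Tset_def)
  obtain uh where uh: "set uh = bV H" and XH: "NG (bV H) (bE H) (bin H) (bout H @ dbl uh) \<in> C"
    using HT by (auto simp: Tset_def)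
  have "btensor (NG (bV K) (bE K) (bin K) (bout K @ dbl uk)) (NG (bV H) (bE H) (bin H) (bout H @ dbl uh)) \<in> C"
    using tens[OF XK XH] .
  then have "NG (bV (btensor K H)) (bE (btensor K H)) (bin (btensor K H))
     (map lft (bout K) @ dbl (map lft uk) @ map rgt (bout H) @ dbl (map rgt uh)) \<in> C"
    by (simp add: btensor_def)
  then have "NG (bV (btensor K H)) (bE (btensor K H)) (bin (btensor K H))
     (map lft (bout K) @ map rgt (bout H) @ dbl (map lft uk) @ dbl (map rgt uh)) \<in> C"
    by (rule pairs_right)
  then have "NG (bV (btensor K H)) (bE (btensor K H)) (bin (btensor K H))
     (bout (btensor K H) @ dbl (map lft uk @ map rgt uh)) \<in> C"
    by (simp add: btensor_def)
  moreover have "set (map lft uk @ map rgt uh) = bV (btensor K H)" using uk uh by (simp add: btensor_def)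
  ultimately show ?thesis using tens[OF KC HC] unfolding Tset_def by blast
qed

lemma T_inv:
  assumes KT: "K \<in> Tset"
  shows "binv K \<in> Tset"
proof -
  have KC: "K \<in> C" using KT by (simp add: Tset_def)
  obtain us where us: "set us = bV K" and X: "NG (bV K) (bE K) (bin K) (bout K @ dbl us) \<in> C"
    using KT by (auto simp: Tset_def)
  have "NG (bV K) (bE K) (bout K @ dbl us) (bin K) \<in> C" using inv_NG[OF X] .
  then have "NG (bV K) (bE K) (bout K) (bin K @ rev (dbl us)) \<in> C" by (rule bend_list)
  then have "NG (bV (binv K)) (bE (binv K)) (bin (binv K)) (bout (binv K) @ dbl (rev us)) \<in> C"
    by (simp add: binv_def)
  moreover have "set (rev us) = bV (binv K)" using us by (simp add: binv_def)
  ultimately show ?thesis using inv[OF KC] unfolding Tset_def by blast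
qed

lemma T_gc: "graph_category Tset"
  unfolding graph_category_def
proof (intro conjI ballI allI impI)
  show "\<And>K. K \<in> Tset \<Longrightarrow> wf_bgraph K" using wf by (auto simp: Tset_def)
  show "\<And>K L. K \<in> Tset \<Longrightarrow> biso K L \<Longrightarrow> L \<in> Tset" using T_iso by blast
  have g: "bM 1 1 \<in> C" "bM 0 2 \<in> C" "bzero \<in> C" using gc unfolding graph_category_def by auto
  show "bM 1 1 \<in> Tset" by (rule full_T[OF g(1)]) (simp add: bM_def)
  show "bM 0 2 \<in> Tset" by (rule full_T[OF g(2)]) (simp add: bM_def numeral_2_eq_2)
  show "bzero \<in> Tset" by (rule full_T[OF g(3)]) (simp add: bzero_def)
  show "\<And>K H. K \<in> Tset \<Longrightarrow> H \<in> Tset \<Longrightarrow> btensor K H \<in> Tset" using T_tensor by blast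
  show "\<And>K H. K \<in> Tset \<Longrightarrow> H \<in> Tset \<Longrightarrow> length (bout K) = length (bin H) \<Longrightarrow> bcomp H K \<in> Tset"
    using T_comp by blast
  show "\<And>K. K \<in> Tset \<Longrightarrow> binv K \<in> Tset" using T_inv by blast
qed

lemma T_quot:
  assumes KT: "K \<in> Tset"
  shows "bquot K P \<in> C"
proof -
  obtain us where us: "set us = bV K" and X: "NG (bV K) (bE K) (bin K) (bout K @ dbl us) \<in> C"
    using KT by (auto simp: Tset_def)
  define q where "q = (\<lambda>v. Min (\<Union>{B \<in> P. v \<in> B}))"
  have "bimg q (NG (bV K) (bE K) (bin K) (bout K @ dbl us)) \<in> C"
    by (rule subst_full[OF X]) (use us in auto)
  then have "NG (q ` bV K) ((\<lambda>e. q ` e) ` bE K) (map q (bin K)) (map q (bout K) @ dbl (map q us)) \<in> C"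
    by (simp add: bimg_def)
  then have "NG (q ` bV K) ((\<lambda>e. q ` e) ` bE K) (map q (bin K)) (map q (bout K)) \<in> C"
    by (rule drop_pairs[unfolded dbl_def[symmetric]])
  then show ?thesis by (simp add: bquot_def bimg_def q_def)
qed

end

theorem backward:
  assumes Swf: "\<forall>K\<in>S. wf_bgraph K \<and> bV K \<subseteq> set (bin K) \<union> set (bout K)"
  shows "group_theoretical (gen_category (S \<union> {Pgt}))"
proof -
  have Xwf: "\<forall>K\<in>S \<union> {Pgt}. wf_bgraph K" using Swf by (auto simp: Pgt_def wf_bgraph_def)
  have gcG: "graph_category (gen_category (S \<union> {Pgt}))" using gen_gc[OF Xwf] .
  interpret gcatP "gen_category (S \<union> {Pgt})"
  proof unfold_locales
    show "graph_category (gen_category (S \<union> {Pgt}))" by (rule gcG)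
    show "Pgt \<in> gen_category (S \<union> {Pgt})" using gen_sup[of "S \<union> {Pgt}"] by blast
  qed
  have "S \<union> {Pgt} \<subseteq> Tset"
  proof
    fix K assume K: "K \<in> S \<union> {Pgt}"
    then have "K \<in> gen_category (S \<union> {Pgt})" using gen_sup by blast
    moreover have "bV K \<subseteq> set (bin K) \<union> set (bout K)" using K Swf by (auto simp: Pgt_def)
    ultimately show "K \<in> Tset" by (rule full_T)
  qed
  then have sub: "gen_category (S \<union> {Pgt}) \<subseteq> Tset" using gen_least[OF T_gc] by blast
  show ?thesis unfolding group_theoretical_def using gcG sub T_quot by blast
qed

theorem proposition2p33:
  assumes "graph_category C"
  shows "group_theoretical C \<longleftrightarrow>
    (\<exists>S. (\<forall>K\<in>S. wf_bgraph K \<and> bV K \<subseteq> set (bin K) \<union> set (bout K)) \<and>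
         C = gen_category (S \<union> {Pgt}))"
  using forward backward by blast



end
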